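(* Let $R$ be a ring and $K\subseteq R$ a subring (containing $1$) which is a (not necessarily commutative) field, and suppose that the projective line $\mathbb{P}(R)$ is disconnected. Then the generalized chain geometry $\Sigma(K,R)$ admits an automorphism which is not induced by any semilinear bijection of $R^2$.
   Context: $R$ is an associative ring with unit element $1$; $\mathrm{GL}_2(R)$ is the group of invertible $2\times2$ matrices over $R$. A pair $(a,b)\in R^2$ is admissible if it is the first row of some matrix in $\mathrm{GL}_2(R)$. The projective line $\mathbb{P}(R)$ is the set of all cyclic submodules $R(a,b)$ of the left $R$-module $R^2$ with $(a,b)$ admissible; $\mathrm{GL}_2(R)$ acts on it by $R(a,b)\mapsto R((a,b)G)$. Two points $R(a,b)$, $R(c,d)$ are distant iff $\begin{pmatrix}a&b\\c&d\end{pmatrix}\in\mathrm{GL}_2(R)$; $\mathbb{P}(R)$ is disconnected if the graph on $\mathbb{P}(R)$ whose edges are the pairs of distant points has more than one connected component. For a subfield $K$ of $R$, the standard $K$-chain is $\{R(k,l):(k,l)\in K^2\setminus\{(0,0)\}\}\subseteq\mathbb{P}(R)$, and the $K$-chains are its images under $\mathrm{GL}_2(R)$; $\Sigma(K,R)$ is the incidence structure (point set $\mathbb{P}(R)$, blocks the $K$-chains), and an automorphism of it is a bijection of $\mathbb{P}(R)$ which maps the set of $K$-chains onto itself. A semilinear bijection of $R^2$ is a bijective additive map $f:R^2\to R^2$ for which there is a ring automorphism $\zeta$ of $R$ with $f(rv)=r^\zeta f(v)$ for all $r\in R$, $v\in R^2$; a bijection $\gamma$ of $\mathbb{P}(R)$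 is induced by $f$ if $p^\gamma=f(p)$ for all $p\in\mathbb{P}(R)$. *)

theory Defs
  imports Main
begin

text \<open>Elements of R^2 are pairs (row vectors); a 2x2 matrix (a,b,c,d) has rows (a,b) and (c,d).\<close>

type_synonym 'a mat2 = "'a \<times> 'a \<times> 'a \<times> 'a"

definition mmult2 :: "'a::ring_1 mat2 \<Rightarrow> 'a mat2 \<Rightarrow> 'a mat2" where
  "mmult2 M N = (case M of (a,b,c,d) \<Rightarrow> case N of (e,f,g,h) \<Rightarrow>
     (a*e + b*g, a*f + b*h, c*e + d*g, c*f + d*h))"

definition id2 :: "'a::ring_1 mat2" where
  "id2 = (1,0,0,1)"

definition GL2 :: "'a::ring_1 mat2 set" where
  "GL2 = {M. \<exists>N. mmult2 M N = id2 \<and> mmult2 N M = id2}"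

definition vmult :: "'a::ring_1 \<times> 'a \<Rightarrow> 'a mat2 \<Rightarrow> 'a \<times> 'a" where
  "vmult v G = (case v of (x,y) \<Rightarrow> case G of (a,b,c,d) \<Rightarrow> (x*a + y*c, x*b + y*d))"

definition smult2 :: "'a::ring_1 \<Rightarrow> 'a \<times> 'a \<Rightarrow> 'a \<times> 'a" where
  "smult2 r v = (r * fst v, r * snd v)"

definition vadd :: "'a::ring_1 \<times> 'a \<Rightarrow> 'a \<times> 'a \<Rightarrow> 'a \<times> 'a" where
  "vadd v w = (fst v + fst w, snd v + snd w)"

definition admissible :: "'a::ring_1 \<times> 'a \<Rightarrow> bool" where
  "admissible p = (\<exists>c d. (fst p, snd p, c, d) \<in> GL2)"

definition cyc :: "'a::ring_1 \<times> 'a \<Rightarrow> ('a \<times> 'a) set" where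
  "cyc p = {smult2 r p | r. True}"

definition projline :: "('a::ring_1 \<times> 'a) set set" where
  "projline = {cyc p | p. admissible p}"

definition distant :: "('a::ring_1 \<times> 'a) set \<Rightarrow> ('a \<times> 'a) set \<Rightarrow> bool" where
  "distant P Q = (\<exists>a b c d. P = cyc (a,b) \<and> Q = cyc (c,d) \<and> (a,b,c,d) \<in> GL2)"

definition disconnected :: "'a::ring_1 itself \<Rightarrow> bool" where
  "disconnected _ = (\<exists>P\<in>(projline :: ('a \<times> 'a) set set). \<exists>Q\<in>projline.
      \<not> (\<lambda>X Y. X \<in> projline \<and> Y \<in> projline \<and> distant X Y)\<^sup>*\<^sup>* P Q)"

definition subfield :: "'a::ring_1 set \<Rightarrow> bool" where
  "subfield K = (0 \<in> K \<and> 1 \<in> K \<and> (0::'a) \<noteq> 1 \<and>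
     (\<forall>x\<in>K. \<forall>y\<in>K. x + y \<in> K \<and> x - y \<in> K \<and> x * y \<in> K) \<and>
     (\<forall>x\<in>K. x \<noteq> 0 \<longrightarrow> (\<exists>y\<in>K. x * y = 1 \<and> y * x = 1)))"

text \<open>action of G on a point (as a set): p \<mapsto> image of p under v \<mapsto> vG, which equals R((a,b)G)\<close>
definition pact :: "('a::ring_1 \<times> 'a) set \<Rightarrow> 'a mat2 \<Rightarrow> ('a \<times> 'a) set" where
  "pact P G = (\<lambda>v. vmult v G) ` P"

definition std_chain :: "'a::ring_1 set \<Rightarrow> ('a \<times> 'a) set set" where
  "std_chain K = {cyc (k,l) | k l. k \<in> K \<and> l \<in> K \<and> (k,l) \<noteq> (0,0)}"

definition chains :: "'a::ring_1 set \<Rightarrow> ('a \<times> 'a) set set set" where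
  "chains K = {(\<lambda>P. pact P G) ` std_chain K | G. G \<in> GL2}"

definition chain_automorphism :: "'a::ring_1 set \<Rightarrow> (('a \<times> 'a) set \<Rightarrow> ('a \<times> 'a) set) \<Rightarrow> bool" where
  "chain_automorphism K \<gamma> = (bij_betw \<gamma> projline projline \<and> (\<lambda>C. \<gamma> ` C) ` chains K = chains K)"

definition ring_automorphism :: "('a::ring_1 \<Rightarrow> 'a) \<Rightarrow> bool" where
  "ring_automorphism z = (bij z \<and> (\<forall>x y. z (x + y) = z x + z y) \<and>
     (\<forall>x y. z (x * y) = z x * z y) \<and> z 1 = 1)"

definition semilinear_bij :: "('a::ring_1 \<times> 'a \<Rightarrow> 'a \<times> 'a) \<Rightarrow> bool" where
  "semilinear_bij f = (bij f \<and> (\<forall>v w. f (vadd v w) = vadd (f v) (f w)) \<and>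
     (\<exists>z. ring_automorphism z \<and> (\<forall>r v. f (smult2 r v) = smult2 (z r) (f v))))"

definition induced_by :: "(('a::ring_1 \<times> 'a) set \<Rightarrow> ('a \<times> 'a) set) \<Rightarrow> ('a \<times> 'a \<Rightarrow> 'a \<times> 'a) \<Rightarrow> bool" where
  "induced_by \<gamma> f = (\<forall>P\<in>projline. \<gamma> P = f ` P)"

end

theory Submission
  imports Defs
begin

lemma mmult2_assoc: "mmult2 (mmult2 A B) C = mmult2 A (mmult2 B (C::'a::ring_1 mat2))"
  by (cases A rule: prod_cases4; cases B rule: prod_cases4; cases C rule: prod_cases4)
     (simp add: mmult2_def distrib_left distrib_right mult.assoc add.assoc)

lemma mmult2_id [simp]: "mmult2 id2 A = A" "mmult2 A id2 = (A::'a::ring_1 mat2)"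
  by (cases A rule: prod_cases4; simp add: mmult2_def id2_def)+

lemma vmult_mmult: "vmult (vmult v A) B = vmult v (mmult2 A (B::'a::ring_1 mat2))"
  by (cases v; cases A rule: prod_cases4; cases B rule: prod_cases4)
     (simp add: mmult2_def vmult_def distrib_left distrib_right mult.assoc add.assoc)

lemma vmult_id [simp]: "vmult v (id2::'a::ring_1 mat2) = v"
  by (cases v) (simp add: vmult_def id2_def)

lemma vmult_smult: "vmult (smult2 r v) G = smult2 r (vmult v (G::'a::ring_1 mat2))"
  by (cases v; cases G rule: prod_cases4) (simp add: smult2_def vmult_def distrib_left mult.assoc)

lemma pact_cyc: "pact (cyc v) G = cyc (vmult v (G::'a::ring_1 mat2))"
proof -
  have c: "\<And>w. cyc w = (\<lambda>r. smult2 r w) ` UNIV" by (auto simp: cyc_def)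
  show ?thesis unfolding pact_def c image_image vmult_smult ..
qed

lemma GL2_mult: "A \<in> GL2 \<Longrightarrow> B \<in> GL2 \<Longrightarrow> mmult2 A B \<in> (GL2::'a::ring_1 mat2 set)"
proof -
  assume "A \<in> GL2" "B \<in> GL2"
  then obtain NA NB where a: "mmult2 A NA = id2" "mmult2 NA A = id2"
    and b: "mmult2 B NB = id2" "mmult2 NB B = id2" unfolding GL2_def by blast
  have "mmult2 (mmult2 A B) (mmult2 NB NA) = id2"
    by (simp add: mmult2_assoc flip: mmult2_assoc[of B NB] add: a b)
  moreover have "mmult2 (mmult2 NB NA) (mmult2 A B) = id2"
    by (simp add: mmult2_assoc flip: mmult2_assoc[of NA A] add: a b)
  ultimately show ?thesis unfolding GL2_def by blast
qed

lemma mmult2_rows: "mmult2 (a,b,c,d) G = (fst (vmult (a,b) G), snd (vmult (a,b) G),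
   fst (vmult (c,d) G), snd (vmult (c,d) (G::'a::ring_1 mat2)))"
  by (cases G rule: prod_cases4) (simp add: mmult2_def vmult_def)

lemma GL2_swap: "(a,b,c,d) \<in> GL2 \<Longrightarrow> (c,d,a,b) \<in> (GL2::'a::ring_1 mat2 set)"
proof -
  assume "(a,b,c,d) \<in> GL2"
  then obtain N where N: "mmult2 (a,b,c,d) N = id2" "mmult2 N (a,b,c,d) = id2"
    unfolding GL2_def by blast
  obtain e f g h where Ne: "N = (e,f,g,h)" by (cases N rule: prod_cases4)
  from N have e1: "a*e+b*g = 1" "a*f+b*h = 0" "c*e+d*g = 0" "c*f+d*h = 1"
    "e*a+f*c = 1" "e*b+f*d = 0" "g*a+h*c = 0" "g*b+h*d = 1"
    unfolding Ne mmult2_def id2_def by simp_all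
  have "mmult2 (c,d,a,b) (f,e,h,g) = id2" unfolding mmult2_def id2_def using e1 by simp
  moreover have "mmult2 (f,e,h,g) (c,d,a,b) = id2" unfolding mmult2_def id2_def using e1
    by (simp add: add.commute)
  ultimately show ?thesis unfolding GL2_def by blast
qed

lemma distant_sym: "distant P Q \<Longrightarrow> distant Q (P::('a::ring_1\<times>'a) set)"
proof -
  assume "distant P Q"
  then obtain a b c d where "P = cyc (a,b)" "Q = cyc (c,d)" "(a,b,c,d) \<in> GL2"
    unfolding distant_def by blast
  then show ?thesis unfolding distant_def using GL2_swap by blast
qed

lemma GL2_adm: "(a,b,c,d) \<in> GL2 \<Longrightarrow> admissible (a,b) \<and> admissible (c,(d::'a::ring_1))"
proof -
  assume h: "(a,b,c,d) \<in> GL2"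
  then have "(c,d,a,b) \<in> GL2" by (rule GL2_swap)
  with h show ?thesis unfolding admissible_def by auto
qed

lemma distant_pl: "distant P Q \<Longrightarrow> P \<in> projline \<and> Q \<in> (projline::('a::ring_1\<times>'a) set set)"
proof -
  assume "distant P Q"
  then obtain a b c d where "P = cyc (a,b)" "Q = cyc (c,d)" "(a,b,c,d) \<in> GL2"
    unfolding distant_def by blast
  then show ?thesis unfolding projline_def using GL2_adm by blast
qed

lemma distant_pact: "distant P Q \<Longrightarrow> G \<in> GL2 \<Longrightarrow> distant (pact P G) (pact Q (G::'a::ring_1 mat2))"
proof -
  assume "distant P Q" "G \<in> GL2"
  then obtain a b c d where d: "P = cyc (a,b)" "Q = cyc (c,d)" "(a,b,c,d) \<in> GL2"
    unfolding distant_def by blast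
  have m: "mmult2 (a,b,c,d) G \<in> GL2" using GL2_mult d(3) \<open>G \<in> GL2\<close> by blast
  obtain x y where u: "vmult (a,b) G = (x,y)" by (cases "vmult (a,b) G")
  obtain z w where v: "vmult (c,d) G = (z,w)" by (cases "vmult (c,d) G")
  have "(x,y,z,w) \<in> GL2" using m unfolding mmult2_rows u v by simp
  then show ?thesis unfolding distant_def d pact_cyc u v by blast
qed

lemma distant_ne: "(0::'a::ring_1) \<noteq> 1 \<Longrightarrow> distant P Q \<Longrightarrow> P \<noteq> (Q::('a\<times>'a) set)"
proof
  assume n: "(0::'a) \<noteq> 1" and "distant P Q" "P = Q"
  then obtain a b c d where d: "P = cyc (a,b)" "Q = cyc (c,d)" "(a,b,c,d) \<in> GL2"
    unfolding distant_def by blast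
  have "(c,d) \<in> cyc (c,d)" unfolding cyc_def smult2_def by (rule CollectI, rule exI[of _ 1]) simp
  moreover have "cyc (c,d) = cyc (a,b)" using d(1,2) \<open>P=Q\<close> by simp
  ultimately have "(c,d) \<in> cyc (a,b)" by (simp only:)
  then obtain r where "(c,d) = smult2 r (a,b)" unfolding cyc_def by blast
  then have r: "c = r*a" "d = r*b" by (simp_all add: smult2_def)
  obtain N where N: "mmult2 (a,b,c,d) N = id2"
    using d(3) unfolding GL2_def by blast
  obtain e f g h where Ne: "N = (e,f,g,h)" by (cases N rule: prod_cases4)
  from N[unfolded Ne] have z: "a*f+b*h = 0" and o: "c*f+d*h = 1" by (simp_all add: mmult2_def id2_def)
  have "(1::'a) = r*(a*f+b*h)" using o r by (simp add: distrib_left mult.assoc)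
  also have "\<dots> = 0" using z by (simp only: mult_zero_right)
  finally show False using n by simp
qed

lemma adm_pact: "admissible v \<Longrightarrow> G \<in> GL2 \<Longrightarrow> admissible (vmult v (G::'a::ring_1 mat2))"
proof -
  assume "admissible v" "G \<in> GL2"
  then obtain c d where "(fst v, snd v, c, d) \<in> GL2" unfolding admissible_def by blast
  then have "mmult2 (fst v, snd v, c, d) G \<in> GL2" using GL2_mult \<open>G \<in> GL2\<close> by blast
  moreover obtain x y where u: "vmult v G = (x,y)" by (cases "vmult v G")
  ultimately show ?thesis unfolding mmult2_rows admissible_def u
    by (cases "vmult (c,d) G") (auto simp: u)
qed

lemma pl_pact: "X \<in> projline \<Longrightarrow> G \<in> GL2 \<Longrightarrow> pact X G \<in> (projline::('a::ring_1\<times>'a) set set)"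
  unfolding projline_def using adm_pact pact_cyc by blast


lemma id2_GL2: "(id2::'a::ring_1 mat2) \<in> GL2"
  unfolding GL2_def by (rule CollectI, rule exI[of _ id2]) simp

lemma cyc_self: "v \<in> cyc (v::'a::ring_1\<times>'a)"
  unfolding cyc_def by (rule CollectI, rule exI[of _ 1]) (simp add: smult2_def)

lemma smult2_smult2: "smult2 s (smult2 t v) = smult2 (s*t) (v::'a::ring_1\<times>'a)"
  by (simp add: smult2_def mult.assoc)

lemma dist_sym_rtp: "distant\<^sup>*\<^sup>* X Y \<Longrightarrow> distant\<^sup>*\<^sup>* Y (X::('a::ring_1\<times>'a) set)"
proof (induction rule: rtranclp_induct)
  case base then show ?case by simp
next
  case (step Y Z)
  have "distant Z Y" using distant_sym[OF step(2)] .
  then show ?case using step(3) by (rule converse_rtranclp_into_rtranclp)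
qed

lemma dist_pact_rtp: "distant\<^sup>*\<^sup>* X Y \<Longrightarrow> G \<in> GL2 \<Longrightarrow>
   distant\<^sup>*\<^sup>* (pact X G) (pact Y (G::'a::ring_1 mat2))"
proof (induction rule: rtranclp_induct)
  case base then show ?case by simp
next
  case (step Y Z)
  then show ?case using rtranclp.rtrancl_into_rtrancl distant_pact by metis
qed

lemma dist_pl_rtp: "distant\<^sup>*\<^sup>* X Y \<Longrightarrow> X \<in> projline \<Longrightarrow> Y \<in> (projline::('a::ring_1\<times>'a) set set)"
  by (induction rule: rtranclp_induct) (auto dest: distant_pl)

lemma rel_eq: "(\<lambda>X Y. X \<in> projline \<and> Y \<in> projline \<and> distant X Y) = (distant::('a::ring_1\<times>'a) set \<Rightarrow> _)"
  using distant_pl by (intro ext) blast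

lemma d10_01: "distant (cyc (1,0)) (cyc (0::'a::ring_1,1::'a))"
proof -
  have "(1::'a,0::'a,0::'a,1::'a) \<in> GL2" using id2_GL2 unfolding id2_def .
  then show ?thesis unfolding distant_def by blast
qed

lemma d01_1x: "distant (cyc (0,1)) (cyc (1::'a::ring_1,x::'a))"
proof -
  have "mmult2 (0,1,1,x) (-x,1,1,0) = id2" "mmult2 (-x,1,1,0) (0,1,1,x) = (id2::'a mat2)"
    by (simp_all add: mmult2_def id2_def)
  then have "(0::'a,1::'a,1::'a,x) \<in> GL2" unfolding GL2_def by blast
  then show ?thesis unfolding distant_def by blast
qed

lemma std_props:
  assumes K: "subfield K" and Y: "Y \<in> std_chain K"
  shows "distant\<^sup>*\<^sup>* (cyc (1,0)) Y" "Y \<in> (projline::('a::ring_1\<times>'a) set set)"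
proof -
  obtain k l where kl: "Y = cyc (k,l)" "k \<in> K" "l \<in> K" "(k,l) \<noteq> (0,0)"
    using Y unfolding std_chain_def by blast
  have "distant\<^sup>*\<^sup>* (cyc (1,0)) Y"
  proof (cases "k = 0")
    case False
    then obtain ki where ki: "k*ki = 1" "ki*k = 1" using K kl unfolding subfield_def by blast
    have "mmult2 (0,1,k,l) (-ki*l,ki,1,0) = id2" "mmult2 (-ki*l,ki,1,0) (0,1,k,l) = (id2::'a mat2)"
      using ki by (simp_all add: mmult2_def id2_def mult.assoc[symmetric])
    then have "(0::'a,1::'a,k,l) \<in> GL2" unfolding GL2_def by blast
    then have "distant (cyc (0,1)) Y" unfolding distant_def kl by blast
    then show ?thesis using d10_01 by (meson rtranclp.rtrancl_into_rtrancl r_into_rtranclp)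
  next
    case True
    then have "l \<noteq> 0" using kl by simp
    then obtain li where li: "l*li = 1" "li*l = 1" using K kl unfolding subfield_def by blast
    have "mmult2 (1,0,0,l) (1,0,0,li) = id2" "mmult2 (1,0,0,li) (1,0,0,l) = (id2::'a mat2)"
      using li by (simp_all add: mmult2_def id2_def)
    then have "(1::'a,0::'a,0,l) \<in> GL2" unfolding GL2_def by blast
    then have "distant (cyc (1,0)) Y" unfolding distant_def kl True by blast
    then show ?thesis by blast
  qed
  then show "distant\<^sup>*\<^sup>* (cyc (1,0)) Y" .
  show "Y \<in> projline" using dist_pl_rtp[OF \<open>distant\<^sup>*\<^sup>* (cyc (1,0)) Y\<close>] d10_01 distant_pl by blast
qed

lemma pact_pact: "pact (pact X A) B = pact X (mmult2 A (B::'a::ring_1 mat2))"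
  unfolding pact_def image_image vmult_mmult ..

lemma mm_cancel: "mmult2 M N = id2 \<Longrightarrow> mmult2 M (mmult2 N X) = (X::'a::ring_1 mat2)"
  by (simp flip: mmult2_assoc)


theorem mainTheorem6:
  fixes K :: "'a::ring_1 set"
  assumes "subfield K"
    and "disconnected TYPE('a)"
  shows "\<exists>\<gamma>. chain_automorphism K \<gamma> \<and> \<not> (\<exists>f. semilinear_bij f \<and> induced_by \<gamma> f)"
proof -
  have K: "subfield K" by fact
  have n01: "(0::'a) \<noteq> 1" using K unfolding subfield_def by blast
  define e :: "('a\<times>'a) set" where "e = cyc (1,0)"
  have epl: "e \<in> projline" unfolding e_def using d10_01 distant_pl by blast
  obtain P Q :: "('a\<times>'a) set" where PQ: "P \<in> projline" "Q \<in> projline" "\<not> distant\<^sup>*\<^sup>* P Q"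
    using assms(2) unfolding disconnected_def rel_eq by blast
  obtain p where p: "p \<in> projline" "\<not> distant\<^sup>*\<^sup>* p e"
  proof (cases "distant\<^sup>*\<^sup>* P e")
    case True
    have "\<not> distant\<^sup>*\<^sup>* Q e"
    proof
      assume "distant\<^sup>*\<^sup>* Q e"
      then have "distant\<^sup>*\<^sup>* e Q" by (rule dist_sym_rtp)
      with True have "distant\<^sup>*\<^sup>* P Q" by (rule rtranclp_trans)
      with PQ show False by blast
    qed
    then show ?thesis using that PQ by blast
  next
    case False then show ?thesis using that PQ by blast
  qed
  obtain q where q: "admissible q" "p = cyc q" using p unfolding projline_def by blast
  obtain a b where qab: "q = (a,b)" by (cases q)
  obtain c d where M: "(a,b,c,d) \<in> GL2" using q(1) unfolding admissible_def qab by auto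
  define Mm where "Mm = (a,b,c,d)"
  obtain N where N: "mmult2 Mm N = id2" "mmult2 N Mm = id2" using M unfolding GL2_def Mm_def by blast
  define H :: "'a mat2" where "H = (0,1,1,0)"
  have HH: "mmult2 H H = id2" unfolding H_def by (simp add: mmult2_def id2_def)
  define G where "G = mmult2 N (mmult2 H Mm)"
  have GG: "mmult2 G G = id2"
    unfolding G_def by (simp add: mmult2_assoc mm_cancel[OF N(1)] mm_cancel[OF HH] N(2))
  have GGL: "G \<in> GL2" unfolding GL2_def using GG by blast
  have qM: "q = vmult (1,0) Mm" unfolding qab Mm_def by (simp add: vmult_def)
  have "vmult q G = vmult (vmult (vmult q N) H) Mm" unfolding G_def by (simp add: vmult_mmult mmult2_assoc)
  also have "vmult q N = (1,0)" unfolding qM vmult_mmult N(1) by simp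
  also have "vmult (1,0) H = (0,1)" unfolding H_def by (simp add: vmult_def)
  also have "vmult (0,1) Mm = (c,d)" unfolding Mm_def by (simp add: vmult_def)
  finally have pG: "pact p G = cyc (c,d)" unfolding q(2) pact_cyc by simp
  have "distant (cyc (a,b)) (cyc (c,d))" unfolding distant_def using M by blast
  then have dpG: "distant p (pact p G)" unfolding pG unfolding q(2) qab .
  have ppG: "pact p G \<noteq> p" using distant_ne[OF n01 dpG] by simp
  have inv: "\<And>X. pact (pact X G) G = X"
  proof -
    fix X
    have "pact (pact X G) G = pact X id2" by (simp only: pact_pact GG)
    then show "pact (pact X G) G = X" by (simp add: pact_def)
  qed
  have inD: "\<And>X. distant\<^sup>*\<^sup>* p X \<Longrightarrow> distant\<^sup>*\<^sup>* p (pact X G)"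
  proof -
    fix X assume "distant\<^sup>*\<^sup>* p X"
    then have "distant\<^sup>*\<^sup>* (pact p G) (pact X G)" using dist_pact_rtp GGL by blast
    then show "distant\<^sup>*\<^sup>* p (pact X G)" by (rule converse_rtranclp_into_rtranclp[where r=distant, OF dpG])
  qed
  have notD: "\<not> distant\<^sup>*\<^sup>* p (pact X G)" if "\<not> distant\<^sup>*\<^sup>* p X" for X
  proof
    assume "distant\<^sup>*\<^sup>* p (pact X G)"
    then have "distant\<^sup>*\<^sup>* p (pact (pact X G) G)" by (rule inD)
    then show False using that inv by simp
  qed
  define \<gamma> where "\<gamma> X = (if distant\<^sup>*\<^sup>* p X then pact X G else X)" for X
  have gpl: "\<And>X. X \<in> projline \<Longrightarrow> \<gamma> X \<in> projline" unfolding \<gamma>_def using pl_pact[OF _ GGL] by auto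
  have gg: "\<And>X. \<gamma> (\<gamma> X) = X" unfolding \<gamma>_def using inD notD inv by auto
  have bij: "bij_betw \<gamma> projline projline"
    by (rule bij_betw_byWitness[where f' = \<gamma>]) (auto simp: gpl gg)
  have chain_img: "\<gamma> ` C \<in> chains K" "C \<subseteq> projline" if C: "C \<in> chains K" for C
  proof -
    obtain G' where G': "G' \<in> GL2" "C = (\<lambda>P. pact P G') ` std_chain K"
      using C unfolding chains_def by blast
    define bb where "bb = pact e G'"
    have Cp: "Y \<in> projline \<and> distant\<^sup>*\<^sup>* bb Y" if YC: "Y \<in> C" for Y
    proof -
      obtain Z where Z: "Z \<in> std_chain K" "Y = pact Z G'" using YC G' by blast
      have "Y \<in> projline" unfolding Z(2) by (rule pl_pact[OF std_props(2)[OF K Z(1)] G'(1)])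
      moreover have "distant\<^sup>*\<^sup>* bb Y" unfolding Z(2) bb_def e_def
        by (rule dist_pact_rtp[OF std_props(1)[OF K Z(1)] G'(1)])
      ultimately show ?thesis by blast
    qed
    then show "C \<subseteq> projline" by blast
    show "\<gamma> ` C \<in> chains K"
    proof (cases "distant\<^sup>*\<^sup>* p bb")
      case True
      then have "\<forall>Y\<in>C. distant\<^sup>*\<^sup>* p Y" using Cp by (blast intro: rtranclp_trans)
      then have "\<gamma> ` C = (\<lambda>P. pact P G) ` C" unfolding \<gamma>_def by (intro image_cong) auto
      also have "\<dots> = (\<lambda>P. pact P (mmult2 G' G)) ` std_chain K"
        unfolding G'(2) image_image pact_pact ..
      finally show ?thesis unfolding chains_def using GL2_mult[OF G'(1) GGL] by blast
    next
      case False
      have "\<forall>Y\<in>C. \<not> distant\<^sup>*\<^sup>* p Y"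
      proof (intro ballI notI)
        fix Y assume "Y \<in> C" "distant\<^sup>*\<^sup>* p Y"
        then have "distant\<^sup>*\<^sup>* Y bb" using Cp dist_sym_rtp by blast
        have "distant\<^sup>*\<^sup>* p bb" using \<open>distant\<^sup>*\<^sup>* p Y\<close> \<open>distant\<^sup>*\<^sup>* Y bb\<close> by (rule rtranclp_trans)
        then show False using False by blast
      qed
      then have "\<gamma> ` C = C" unfolding \<gamma>_def by (auto simp: image_iff)
      then show ?thesis using C by simp
    qed
  qed
  have "(\<lambda>C. \<gamma> ` C) ` chains K = chains K"
  proof
    show "(\<lambda>C. \<gamma> ` C) ` chains K \<subseteq> chains K" using chain_img by blast
    show "chains K \<subseteq> (\<lambda>C. \<gamma> ` C) ` chains K"
    proof
      fix C assume C: "C \<in> chains K"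
      have "\<gamma> ` (\<gamma> ` C) = C" unfolding image_image gg by simp
      then show "C \<in> (\<lambda>C. \<gamma> ` C) ` chains K" using chain_img(1)[OF C] by (metis imageI)
    qed
  qed
  then have aut: "chain_automorphism K \<gamma>" unfolding chain_automorphism_def using bij by blast
  have notind: "\<not> (\<exists>f. semilinear_bij f \<and> induced_by \<gamma> f)"
  proof
    assume "\<exists>f. semilinear_bij f \<and> induced_by \<gamma> f"
    then obtain f where sb: "semilinear_bij f" and ib: "induced_by \<gamma> f" by blast
    obtain z where fz: "ring_automorphism z" "\<forall>r v. f (smult2 r v) = smult2 (z r) (f v)"
      using sb unfolding semilinear_bij_def by blast
    have f: "bij f" "\<And>v w. f (vadd v w) = vadd (f v) (f w)"
      "ring_automorphism z" "\<And>r v. f (smult2 r v) = smult2 (z r) (f v)"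
      using sb fz unfolding semilinear_bij_def by auto
    have ind: "\<And>P. P \<in> projline \<Longrightarrow> \<gamma> P = f ` P" using ib unfolding induced_by_def by blast
    have z1: "z 1 = 1" and zs: "surj z" using f(3) unfolding ring_automorphism_def bij_def by auto
    have fixY: "f ` Y = Y" if "distant\<^sup>*\<^sup>* e Y" for Y
    proof -
      have "Y \<in> projline" using dist_pl_rtp[OF that epl] .
      moreover have "\<not> distant\<^sup>*\<^sup>* p Y"
      proof
        assume "distant\<^sup>*\<^sup>* p Y"
        moreover have "distant\<^sup>*\<^sup>* Y e" using dist_sym_rtp[OF that] .
        ultimately have "distant\<^sup>*\<^sup>* p e" by (rule rtranclp_trans)
        then show False using p(2) by blast
      qed
      ultimately show ?thesis using ind[of Y] unfolding \<gamma>_def by simp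
    qed
    have fe: "f ` e = e" using fixY by blast
    have f01: "f ` cyc (0,1) = cyc (0,1)" using fixY d10_01 unfolding e_def by blast
    have f1x: "f ` cyc (1,x) = cyc (1,x)" for x
      using fixY d10_01 d01_1x unfolding e_def
      by (meson rtranclp.rtrancl_into_rtrancl r_into_rtranclp)
    obtain a1 a2 where fa: "f (1,0) = (a1,a2)" by (cases "f (1,0)")
    have "f (1,0) \<in> e" using fe cyc_self unfolding e_def by blast
    then obtain r where "(a1,a2) = smult2 r (1,0)" unfolding e_def cyc_def fa by blast
    then have a2: "a2 = 0" by (simp add: smult2_def)
    have "(1,0) \<in> f ` e" using fe cyc_self unfolding e_def by blast
    then obtain w where "w \<in> e" "(1,0) = f w" by blast
    then obtain r where "(1,0) = f (smult2 r (1,0))" unfolding e_def cyc_def by blast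
    then have "(1,0) = smult2 (z r) (a1,0)" using f(4) fa a2 by simp
    then have ca: "z r * a1 = 1" by (simp add: smult2_def)
    obtain b1 b2 where fb: "f (0,1) = (b1,b2)" by (cases "f (0,1)")
    have "f (0,1) \<in> cyc (0,1)" using f01 cyc_self by blast
    then obtain r' where "(b1,b2) = smult2 r' (0,1)" unfolding cyc_def fb by blast
    then have b1: "b1 = 0" by (simp add: smult2_def)
    have f1x': "z x * b2 = a1 * x" for x
    proof -
      have "(1,x) = vadd (1,0) (smult2 x (0,1))" by (simp add: vadd_def smult2_def)
      then have "f (1,x) = vadd (a1,0) (smult2 (z x) (0,b2))" using f(2,4) fa fb a2 b1 by simp
      then have eq: "f (1,x) = (a1, z x * b2)" by (simp add: vadd_def smult2_def)
      have "f (1,x) \<in> cyc (1,x)" using f1x cyc_self by blast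
      then obtain s where "(a1, z x * b2) = smult2 s (1,x)" unfolding cyc_def eq by blast
      then show ?thesis by (simp add: smult2_def)
    qed
    have "b2 = a1" using f1x'[of 1] z1 by simp
    then have za: "\<And>x. z x * a1 = a1 * x" using f1x' by simp
    have fq: "f q = smult2 a1 q"
    proof -
      have "q = vadd (smult2 a (1,0)) (smult2 b (0,1))" unfolding qab by (simp add: vadd_def smult2_def)
      then have "f q = vadd (smult2 (z a) (a1,0)) (smult2 (z b) (0,a1))"
        using f(2,4) fa fb a2 b1 \<open>b2 = a1\<close> by simp
      then show ?thesis unfolding qab by (simp add: vadd_def smult2_def za)
    qed
    have "f ` p = p"
    proof
      show "f ` p \<subseteq> p"
      proof
        fix y assume "y \<in> f ` p"
        then obtain r where "y = f (smult2 r q)" unfolding q(2) cyc_def by blast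
        then have "y = smult2 (z r * a1) q" using f(4) fq smult2_smult2 by simp
        then show "y \<in> p" unfolding q(2) cyc_def by blast
      qed
      show "p \<subseteq> f ` p"
      proof
        fix y assume "y \<in> p"
        then obtain s where y: "y = smult2 s q" unfolding q(2) cyc_def by blast
        obtain t where t: "z t = s * z r" using zs by (metis surjD)
        have "f (smult2 t q) = smult2 (s * z r * a1) q" using f(4) fq smult2_smult2 t by simp
        also have "\<dots> = y" using ca y by (simp add: mult.assoc)
        finally show "y \<in> f ` p" unfolding q(2) cyc_def by blast
      qed
    qed
    moreover have "\<gamma> p = pact p G" unfolding \<gamma>_def by simp
    ultimately show False using ind[OF p(1)] ppG by simp
  qed
  show ?thesis using aut notind by blast
qed

end
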